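(* Consider the generalized linear model described in the context with $m=p\geq 2$ distinct design points $\mathbf{x}_1,\ldots,\mathbf{x}_m$, model matrix $\mathbf{X}\in\mathbb{R}^{m\times p}$ with $\mathrm{rank}(\mathbf{X})=p$, and $\nu_i>0$ for each $i=1,\ldots,m$. Then an allocation $\mathbf{w}_*=(w_1^*,\ldots,w_m^* )^T\in S_m$ is A-optimal if and only if \[ w_i^*=\frac{\sqrt{c_i/\nu_i}}{\sum_{j=1}^m\sqrt{c_j/\nu_j}},\qquad i=1,\ldots,m, \] where $c_i>0$ is the $i$th diagonal element of $(\mathbf{X}\mathbf{X}^T)^{-1}$.
   Context: Generalized linear model (GLM): independent responses $Y_i$ from a one-parameter exponential family with $E(Y_i)=\mu_i$ and $\eta_i=g(\mu_i)=\mathbf{X}_i^T\boldsymbol\beta$, where $g$ is the link function, $\mathbf{X}_i=\mathbf{q}(\mathbf{x}_i)=(q_1(\mathbf{x}_i),\ldots,q_p(\mathbf{x}_i))^T$ for given predictor functions $q_1,\ldots,q_p$ and covariate vectors $\mathbf{x}_i\in\mathbb{R}^d$, and $\boldsymbol\beta\in\mathbb{R}^p$ is a fixed (assumed) parameter vector. Let $\nu_i=(\partial\mu_i/\partial\eta_i)^2/\mathrm{Var}(Y_i)\ge 0$. Given distinct design points $\mathbf{x}_1,\ldots,\mathbf{x}_m$, the model matrix is $\mathbf{X}=(\mathbf{q}(\mathbf{x}_1),\ldots,\mathbf{q}(\mathbf{x}_m))^T\in\mathbb{R}^{m\times p}$. Let $S_m=\{\mathbf{w}=(w_1,\ldots,w_m)^T\in\mathbb{R}^m: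 w_i\ge 0,\ \sum_i w_i=1\}$, $\mathbf{W}=\mathrm{diag}\{w_1\nu_1,\ldots,w_m\nu_m\}$, $f(\mathbf{w})=|\mathbf{X}^T\mathbf{W}\mathbf{X}|$, and $h(\mathbf{w})=[\mathrm{tr}((\mathbf{X}^T\mathbf{W}\mathbf{X})^{-1})]^{-1}$ if $f(\mathbf{w})>0$, $h(\mathbf{w})=0$ if $f(\mathbf{w})=0$. An allocation $\mathbf{w}\in S_m$ is A-optimal if it maximizes $h$ over $S_m$. *)

theory Defs
  imports "HOL-Analysis.Analysis"
begin

definition model_matrix :: "('d \<Rightarrow> real^'p) \<Rightarrow> ('m \<Rightarrow> 'd) \<Rightarrow> real^'p^'m" where
  "model_matrix q x = (\<chi> i j. q (x i) $ j)"

definition simplex_alloc :: "(real^'m) set" where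
  "simplex_alloc = {w. (\<forall>i. w $ i \<ge> 0) \<and> sum (\<lambda>i. w $ i) UNIV = 1}"

definition weight_matrix :: "real^'m \<Rightarrow> real^'m \<Rightarrow> real^'m^'m" where
  "weight_matrix \<nu> w = (\<chi> i j. if i = j then w $ i * \<nu> $ i else 0)"

definition f_det :: "real^'p^'m \<Rightarrow> real^'m \<Rightarrow> real^'m \<Rightarrow> real" where
  "f_det X \<nu> w = det (transpose X ** weight_matrix \<nu> w ** X)"

definition h_A :: "real^'p^'m \<Rightarrow> real^'m \<Rightarrow> real^'m \<Rightarrow> real" where
  "h_A X \<nu> w = (if f_det X \<nu> w > 0
      then inverse (trace (matrix_inv (transpose X ** weight_matrix \<nu> w ** X))) else 0)"

definition A_optimal :: "real^'p^'m \<Rightarrow> real^'m \<Rightarrow> real^'m \<Rightarrow> bool" where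
  "A_optimal X \<nu> w \<longleftrightarrow> w \<in> simplex_alloc \<and> (\<forall>v \<in> simplex_alloc. h_A X \<nu> v \<le> h_A X \<nu> w)"

end

theory Submission imports Defs begin
definition dg :: "real^'m \<Rightarrow> real^'m^'m" where
  "dg d = (\<chi> i j. if i = j then d $ i else 0)"

lemma weight_dg: "weight_matrix \<nu> w = dg (\<chi> i. w $ i * \<nu> $ i)"
  by (simp add: weight_matrix_def dg_def vec_eq_iff)

lemma mul_dg_right: "((A::real^'m^'n) ** dg d) $ i $ j = A $ i $ j * d $ j"
proof -
  have "((A::real^'m^'n) ** dg d) $ i $ j = (\<Sum>k\<in>UNIV. if k = j then A $ i $ k * d $ j else 0)"
    unfolding matrix_matrix_mult_def dg_def vec_lambda_beta by (rule sum.cong) auto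
  then show ?thesis by simp
qed

lemma mul_dg_left: "(dg d ** (A::real^'n^'m)) $ i $ j = d $ i * A $ i $ j"
proof -
  have "(dg d ** (A::real^'n^'m)) $ i $ j = (\<Sum>k\<in>UNIV. if i = k then d $ i * A $ i $ j else 0)"
    unfolding matrix_matrix_mult_def dg_def vec_lambda_beta by (rule sum.cong) auto
  then show ?thesis by simp
qed

lemma dg_dg: "dg d ** dg e = dg (\<chi> i. d $ i * e $ i)"
  by (simp add: vec_eq_iff mul_dg_right) (simp add: dg_def)

lemma dg_inv: "(\<forall>i. d $ i \<noteq> 0) \<Longrightarrow> dg d ** dg (\<chi> i. 1 / d $ i) = mat 1"
  by (simp add: dg_dg) (simp add: dg_def mat_def vec_eq_iff)

lemma trace_N:
  "trace ((Y::real^'m^'p) ** dg e ** transpose Y) = (\<Sum>i\<in>UNIV. e $ i * (transpose Y ** Y) $ i $ i)"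
proof -
  have "trace (Y ** dg e ** transpose Y) = (\<Sum>k\<in>UNIV. \<Sum>j\<in>UNIV. Y $ k $ j * e $ j * Y $ k $ j)"
    by (simp add: trace_def matrix_matrix_mult_def[of "Y ** dg e"] mul_dg_right transpose_def)
  also have "\<dots> = (\<Sum>j\<in>UNIV. \<Sum>k\<in>UNIV. Y $ k $ j * e $ j * Y $ k $ j)" by (rule sum.swap)
  also have "\<dots> = (\<Sum>i\<in>UNIV. e $ i * (transpose Y ** Y) $ i $ i)"
    by (simp add: matrix_matrix_mult_def transpose_def sum_distrib_left algebra_simps)
  finally show ?thesis .
qed

lemma matrix_inv_eq:
  fixes A :: "real^'n^'m"
  assumes "A ** B = mat 1" "B ** A = mat 1"
  shows "matrix_inv A = B"
proof -
  have "\<exists>A'. A ** A' = mat 1 \<and> A' ** A = mat 1" using assms by blast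
  then have h: "A ** matrix_inv A = mat 1 \<and> matrix_inv A ** A = mat 1"
    unfolding matrix_inv_def by (rule someI_ex)
  have "matrix_inv A = matrix_inv A ** (A ** B)" using assms by simp
  also have "\<dots> = B" using h by (simp add: matrix_mul_assoc)
  finally show ?thesis .
qed

lemma two_sided_inverse:
  fixes X :: "real^'p^'m"
  assumes "CARD('m) = CARD('p)" "rank X = CARD('p)"
  shows "\<exists>Y. Y ** X = mat 1 \<and> X ** Y = mat 1"
proof -
  have "inj ((*v) X)" using assms full_rank_injective by blast
  then obtain L where L: "L ** X = mat 1" using matrix_left_invertible_injective by blast
  have "surj ((*v) X)" using assms full_rank_surjective by metis
  then obtain R where R: "X ** R = mat 1" using matrix_right_invertible_surjective by blast
  have "L = L ** (X ** R)" using R by simp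
  also have "\<dots> = R" using L by (simp add: matrix_mul_assoc)
  finally show ?thesis using L R by metis
qed

context
  fixes X :: "real^'p^'m" and Y :: "real^'m^'p"
  assumes YX: "Y ** X = mat 1" and XY: "X ** Y = mat 1"
begin

lemma inv_XXt: "matrix_inv (X ** transpose X) = transpose Y ** Y"
proof (rule matrix_inv_eq)
  have "X ** transpose X ** (transpose Y ** Y) = X ** (transpose (Y ** X)) ** Y"
    by (simp add: matrix_mul_assoc matrix_transpose_mul)
  then show "X ** transpose X ** (transpose Y ** Y) = mat 1" using YX XY by simp
  have "transpose Y ** Y ** (X ** transpose X) = transpose Y ** (Y ** X) ** transpose X"
    by (simp add: matrix_mul_assoc)
  also have "\<dots> = transpose (X ** Y)" using YX by (simp add: matrix_transpose_mul)
  finally show "transpose Y ** Y ** (X ** transpose X) = mat 1" using XY by simp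
qed

lemma inv_M:
  assumes d: "\<forall>i. d $ i \<noteq> 0"
  shows "matrix_inv (transpose X ** dg d ** X) = Y ** dg (\<chi> i. 1 / d $ i) ** transpose Y"
proof (rule matrix_inv_eq)
  let ?E = "dg (\<chi> i. 1 / d $ i)"
  have "transpose X ** dg d ** X ** (Y ** ?E ** transpose Y)
      = transpose X ** dg d ** (X ** Y) ** ?E ** transpose Y"
    by (simp add: matrix_mul_assoc)
  also have "\<dots> = transpose X ** (dg d ** ?E) ** transpose Y"
    using XY by (simp add: matrix_mul_assoc)
  also have "\<dots> = transpose (Y ** X)" using dg_inv[OF d] by (simp add: matrix_transpose_mul)
  finally show "transpose X ** dg d ** X ** (Y ** ?E ** transpose Y) = mat 1" using YX by simp
  have tt: "transpose Y ** transpose X = mat 1" using XY by (metis matrix_transpose_mul transpose_mat)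
  have "Y ** ?E ** transpose Y ** (transpose X ** dg d ** X)
      = Y ** ?E ** (transpose Y ** transpose X) ** dg d ** X"
    by (simp add: matrix_mul_assoc)
  also have "\<dots> = Y ** (?E ** dg d) ** X"
    using tt by (simp add: matrix_mul_assoc[symmetric])
  also have "?E ** dg d = mat 1" using dg_inv[of "\<chi> i. 1 / d $ i"] d by simp
  finally show "Y ** ?E ** transpose Y ** (transpose X ** dg d ** X) = mat 1" using YX by simp
qed


end

lemma XtDX_entry: "(transpose (X::real^'p^'m) ** dg d ** X) $ a $ b = (\<Sum>k\<in>UNIV. X $ k $ a * d $ k * X $ k $ b)"
  apply (simp only: matrix_matrix_mult_def[of "transpose X ** dg d" X] vec_lambda_beta mul_dg_right)
  apply (simp add: transpose_def)
  done

lemma det_XtDX: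
  fixes X :: "real^'p^'m" and Y :: "real^'m^'p"
  assumes XY: "X ** Y = mat 1" and card: "CARD('m) = CARD('p)"
  shows "\<exists>c>0. det (transpose X ** dg d ** X) = c * (\<Prod>k\<in>UNIV. d $ k)"
proof -
  obtain \<sigma> :: "'p \<Rightarrow> 'm" where bij: "bij_betw \<sigma> UNIV UNIV"
    using finite_same_card_bij[of "UNIV::'p set" "UNIV::'m set"] card by auto
  then have inj: "inj \<sigma>" by (simp add: bij_betw_def)
  define X' :: "real^'p^'p" where "X' = (\<chi> i j. X $ (\<sigma> i) $ j)"
  define Y' :: "real^'p^'p" where "Y' = (\<chi> j i. Y $ j $ (\<sigma> i))"
  define D' :: "real^'p^'p" where "D' = dg (\<chi> i. d $ (\<sigma> i))"
  have eq: "transpose X ** dg d ** X = transpose X' ** D' ** X'"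
  proof -
    have "(transpose X ** dg d ** X) $ a $ b = (transpose X' ** D' ** X') $ a $ b" for a b
      unfolding XtDX_entry D'_def X'_def
      using sum.reindex_bij_betw[OF bij, of "\<lambda>k. X $ k $ a * d $ k * X $ k $ b"] by simp
    then show ?thesis by (simp add: vec_eq_iff)
  qed
  have "X' ** Y' = mat 1"
  proof -
    have "(X' ** Y') $ a $ b = (X ** Y) $ (\<sigma> a) $ (\<sigma> b)" for a b
      by (simp add: X'_def Y'_def matrix_matrix_mult_def)
    then show ?thesis using XY inj by (simp add: vec_eq_iff mat_def inj_eq)
  qed
  then have "det X' * det Y' = 1" by (metis det_mul det_I)
  then have nz: "det X' \<noteq> 0" by auto
  have "det D' = (\<Prod>i\<in>UNIV. d $ (\<sigma> i))"
    by (subst det_diagonal) (auto simp: D'_def dg_def)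
  also have "\<dots> = (\<Prod>k\<in>UNIV. d $ k)" by (rule prod.reindex_bij_betw[OF bij])
  finally have "det (transpose X ** dg d ** X) = (det X')^2 * (\<Prod>k\<in>UNIV. d $ k)"
    unfolding eq det_mul det_transpose by (simp add: power2_eq_square)
  then show ?thesis using nz by (intro exI[of _ "(det X')^2"]) auto
qed

lemma cs_ineq:
  fixes a v :: "'m::finite \<Rightarrow> real"
  assumes a: "\<forall>i. a i > 0" and v: "\<forall>i. v i > 0" and s: "sum v UNIV = 1"
  shows "(\<Sum>i\<in>UNIV. sqrt (a i))^2 \<le> (\<Sum>i\<in>UNIV. a i / v i)"
    and "(\<Sum>i\<in>UNIV. a i / v i) = (\<Sum>i\<in>UNIV. sqrt (a i))^2 \<Longrightarrow>
          \<forall>i. v i = sqrt (a i) / (\<Sum>j\<in>UNIV. sqrt (a j))"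
proof -
  define S where "S = (\<Sum>i\<in>UNIV. sqrt (a i))"
  have tm: "(sqrt (a i) - S * v i)^2 / v i = a i / v i - 2 * S * sqrt (a i) + S^2 * v i" for i
  proof -
    have "v i > 0" "a i > 0" using a v by auto
    then show ?thesis by (simp add: field_simps power2_eq_square)
  qed
  have key: "(\<Sum>i\<in>UNIV. (sqrt (a i) - S * v i)^2 / v i) = (\<Sum>i\<in>UNIV. a i / v i) - S^2"
    unfolding tm sum.distrib sum_subtractf sum_distrib_left[symmetric] s S_def[symmetric]
    by (simp add: power2_eq_square)
  have nn: "\<forall>i\<in>UNIV. (sqrt (a i) - S * v i)^2 / v i \<ge> 0" using v by (simp add: less_imp_le)
  then have "(\<Sum>i\<in>UNIV. (sqrt (a i) - S * v i)^2 / v i) \<ge> 0" by (simp add: sum_nonneg)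
  then show "(\<Sum>i\<in>UNIV. sqrt (a i))^2 \<le> (\<Sum>i\<in>UNIV. a i / v i)" using key S_def by simp
  assume eq: "(\<Sum>i\<in>UNIV. a i / v i) = (\<Sum>i\<in>UNIV. sqrt (a i))^2"
  then have "(\<Sum>i\<in>UNIV. (sqrt (a i) - S * v i)^2 / v i) = 0" using key S_def by simp
  then have z: "\<forall>i. (sqrt (a i) - S * v i)^2 / v i = 0" using sum_nonneg_eq_0_iff[of UNIV "\<lambda>i. (sqrt (a i) - S * v i)^2 / v i"] nn by simp
  have Spos: "S > 0" unfolding S_def using a by (intro sum_pos) auto
  show "\<forall>i. v i = sqrt (a i) / (\<Sum>j\<in>UNIV. sqrt (a j))"
  proof
    fix i
    have "sqrt (a i) = S * v i" using z v by (metis divide_eq_0_iff less_irrefl right_minus_eq zero_eq_power2)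
    then show "v i = sqrt (a i) / (\<Sum>j\<in>UNIV. sqrt (a j))" using Spos S_def by (simp add: field_simps)
  qed
qed

theorem theorem1:
  fixes q :: "'d \<Rightarrow> real^'p::finite"
    and x :: "'m::finite \<Rightarrow> 'd"
    and \<nu> :: "real^'m"
    and w :: "real^'m"
  assumes "CARD('m) = CARD('p)"
    and "CARD('p) \<ge> 2"
    and "inj x"
    and "rank (model_matrix q x) = CARD('p)"
    and "\<forall>i. \<nu> $ i > 0"
    and "w \<in> simplex_alloc"
  shows "A_optimal (model_matrix q x) \<nu> w \<longleftrightarrow>
    (let X = model_matrix q x;
         c = (\<lambda>i. matrix_inv (X ** transpose X) $ i $ i)
     in \<forall>i. w $ i = sqrt (c i / \<nu> $ i) / (\<Sum>j\<in>UNIV. sqrt (c j / \<nu> $ j)))"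
proof -
  define X where "X = model_matrix q x"
  obtain Y where YX: "Y ** X = mat 1" and XY: "X ** Y = mat 1"
    using two_sided_inverse[of X] assms(1,4) X_def by blast
  define c where "c i = (transpose Y ** Y) $ i $ i" for i
  have c_eq: "matrix_inv (X ** transpose X) $ i $ i = c i" for i
    using inv_XXt[OF YX XY] c_def by simp
  define a where "a i = c i / \<nu> $ i" for i
  have cpos: "c i > 0" for i
  proof -
    have c_sum: "c i = (\<Sum>k\<in>UNIV. (Y $ k $ i)^2)"
      by (simp add: c_def matrix_matrix_mult_def transpose_def power2_eq_square)
    have "(\<Sum>k\<in>UNIV. X $ i $ k * Y $ k $ i) = 1"
      using XY by (simp add: vec_eq_iff matrix_matrix_mult_def mat_def)
    then have "\<exists>k. Y $ k $ i \<noteq> 0" by (metis (no_types, lifting) mult_zero_right sum.neutral zero_neq_one)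
    then obtain k where "Y $ k $ i \<noteq> 0" by blast
    then have "c i \<noteq> 0" unfolding c_sum
      using sum_nonneg_eq_0_iff[of UNIV "\<lambda>k. (Y $ k $ i)^2"] by auto
    moreover have "c i \<ge> 0" unfolding c_sum by (simp add: sum_nonneg)
    ultimately show ?thesis by simp
  qed
  have apos: "\<forall>i. a i > 0" using cpos assms(5) a_def by simp
  have hval: "h_A X \<nu> v = (if \<forall>i. v $ i > 0 then inverse (\<Sum>i\<in>UNIV. a i / v $ i) else 0)"
    if vs: "v \<in> simplex_alloc" for v
  proof -
    define d where "d = (\<chi> i. v $ i * \<nu> $ i)"
    have W: "weight_matrix \<nu> v = dg d" by (simp add: weight_dg d_def)
    obtain c0 where c0: "c0 > 0" "f_det X \<nu> v = c0 * (\<Prod>k\<in>UNIV. d $ k)"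
      using det_XtDX[OF XY assms(1), of d] unfolding f_det_def W by blast
    have vnn: "\<forall>i. v $ i \<ge> 0" using vs by (simp add: simplex_alloc_def)
    show ?thesis
    proof (cases "\<forall>i. v $ i > 0")
      case True
      then have dnz: "\<forall>i. d $ i > 0" using assms(5) by (simp add: d_def)
      then have "(\<Prod>k\<in>UNIV. d $ k) > 0" by (simp add: prod_pos)
      then have fpos: "f_det X \<nu> v > 0" using c0 by simp
      have "trace (matrix_inv (transpose X ** weight_matrix \<nu> v ** X))
          = (\<Sum>i\<in>UNIV. (1 / d $ i) * c i)"
      proof -
        have dnz': "\<forall>i. d $ i \<noteq> 0" using dnz by (simp add: less_imp_neq[symmetric])
        show ?thesis unfolding W inv_M[OF YX XY dnz'] by (simp add: trace_N c_def)
      qed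
      also have "\<dots> = (\<Sum>i\<in>UNIV. a i / v $ i)"
        by (simp add: d_def a_def field_simps)
      finally show ?thesis using True fpos by (simp add: h_A_def)
    next
      case False
      then obtain k where "\<not> v $ k > 0" by blast
      then have "d $ k = 0" using vnn by (simp add: d_def less_le)
      then have "(\<Prod>k\<in>UNIV. d $ k) = 0" by (simp add: prod_zero_iff) blast
      then have "\<not> f_det X \<nu> v > 0" using c0 by (metis mult_zero_right less_irrefl)
      then have "h_A X \<nu> v = 0" by (simp add: h_A_def)
      then show ?thesis by (simp only: if_not_P[OF False])
    qed
  qed
  define S where "S = (\<Sum>j\<in>UNIV. sqrt (a j))"
  have Spos: "S > 0" unfolding S_def using apos by (intro sum_pos) auto
  define ws :: "real^'m" where "ws = (\<chi> i. sqrt (a i) / S)"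
  have wspos: "\<forall>i. ws $ i > 0" using apos Spos by (simp add: ws_def)
  have wssum: "sum (\<lambda>i. ws $ i) UNIV = 1"
    using Spos by (simp add: ws_def S_def sum_divide_distrib[symmetric])
  have wsS: "ws \<in> simplex_alloc" using wspos wssum by (simp add: simplex_alloc_def less_imp_le)
  have Tws: "(\<Sum>i\<in>UNIV. a i / ws $ i) = S^2"
  proof -
    have "a i / ws $ i = S * sqrt (a i)" for i
    proof -
      have "a i > 0" using apos by simp
      then have p: "sqrt (a i) > 0" and sq: "a i = sqrt (a i) * sqrt (a i)" by simp_all
      have "a i / ws $ i = (sqrt (a i) * sqrt (a i)) / (sqrt (a i) / S)" using sq by (simp add: ws_def)
      also have "\<dots> = S * sqrt (a i)" using p Spos by (simp add: field_simps)
      finally show ?thesis .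
    qed
    then show ?thesis by (simp add: sum_distrib_left[symmetric] S_def power2_eq_square)
  qed
  have hws: "h_A X \<nu> ws = inverse (S^2)" using hval[OF wsS] wspos Tws by simp
  have bound: "h_A X \<nu> v \<le> inverse (S^2)" if vs: "v \<in> simplex_alloc" for v
  proof (cases "\<forall>i. v $ i > 0")
    case True
    have "S^2 \<le> (\<Sum>i\<in>UNIV. a i / v $ i)"
      using cs_ineq(1)[of a "\<lambda>i. v $ i"] apos True vs by (simp add: simplex_alloc_def S_def)
    then show ?thesis using hval[OF vs] True Spos
      by (simp add: le_imp_inverse_le)
  next
    case False
    have "h_A X \<nu> v = 0" using hval[OF vs] by (simp only: if_not_P[OF False])
    then show ?thesis by simp
  qed
  have w_in: "w \<in> simplex_alloc" by (rule assms(6))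
  have "A_optimal X \<nu> w \<longleftrightarrow> w = ws"
  proof
    assume opt: "A_optimal X \<nu> w"
    then have "h_A X \<nu> ws \<le> h_A X \<nu> w" using wsS by (simp add: A_optimal_def)
    then have ge: "inverse (S^2) \<le> h_A X \<nu> w" using hws by simp
    have ipos: "inverse (S^2) > 0" using Spos by simp
    have wpos: "\<forall>i. w $ i > 0"
    proof (rule ccontr)
      assume nw: "\<not> (\<forall>i. w $ i > 0)"
      have "h_A X \<nu> w = 0" using hval[OF w_in] by (simp only: if_not_P[OF nw])
      then show False using ge ipos by simp
    qed
    then have hw: "h_A X \<nu> w = inverse (\<Sum>i\<in>UNIV. a i / w $ i)" using hval[OF w_in] by simp
    have sw: "sum (\<lambda>i. w $ i) UNIV = 1" using w_in by (simp add: simplex_alloc_def)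
    have le1: "S^2 \<le> (\<Sum>i\<in>UNIV. a i / w $ i)"
      using cs_ineq(1)[of a "\<lambda>i. w $ i", OF apos wpos sw] unfolding S_def .
    have "inverse (S^2) \<le> inverse (\<Sum>i\<in>UNIV. a i / w $ i)" using ge hw by simp
    then have "(\<Sum>i\<in>UNIV. a i / w $ i) \<le> S^2" using Spos le1
      by (metis inverse_le_imp_le zero_less_power)
    then have "(\<Sum>i\<in>UNIV. a i / w $ i) = S^2" using le1 by simp
    then have "\<forall>i. w $ i = sqrt (a i) / S"
      using cs_ineq(2)[of a "\<lambda>i. w $ i", OF apos wpos sw] unfolding S_def by blast
    then show "w = ws" by (simp add: ws_def vec_eq_iff)
  next
    assume "w = ws"
    then show "A_optimal X \<nu> w" using bound hws wsS by (simp add: A_optimal_def)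
  qed
  also have "\<dots> \<longleftrightarrow> (\<forall>i. w $ i = sqrt (c i / \<nu> $ i) / (\<Sum>j\<in>UNIV. sqrt (c j / \<nu> $ j)))"
    by (simp add: ws_def vec_eq_iff S_def a_def)
  finally show ?thesis unfolding Let_def X_def[symmetric] c_eq .
qed

end
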